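(* Let $\Omega_T$ be the infinite triangular lattice graph, i.e. the graph with vertex set $\mathbb{Z}^2$ in which $(a,b)$ is adjacent to $(a\pm1,b)$, $(a,b\pm1)$, $(a+1,b+1)$ and $(a-1,b-1)$ (a 6-regular graph). Then $\chi_{td}(\Omega_T) = 12$.
   Context: For a (possibly infinite) simple graph $G$ and a positive integer $k$, a proper $k$-total difference labeling of $G$ is a function $f: V(G)\to\{1,\dots,k\}$, extended to edges by $f(\{u,v\}) = |f(u)-f(v)|$, such that: (i) adjacent vertices receive different labels; (ii) two distinct edges sharing a vertex receive different labels; (iii) no edge receives the same label as either of its endpoints. $\chi_{td}(G)$ denotes the smallest $k$ for which $G$ has a proper $k$-total difference labeling. *)

theory Defs
  imports Main
begin

text \<open>A (possibly infinite) simple graph is given by a symmetric irreflexive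
adjacency relation adj on a vertex type; edges are unordered pairs {u,v} with adj u v.
Labels f :: 'v => nat; edge label of {u,v} is |f u - f v| (computed on int).\<close>

definition proper_total_diff_labeling ::
  "('v \<Rightarrow> 'v \<Rightarrow> bool) \<Rightarrow> nat \<Rightarrow> ('v \<Rightarrow> nat) \<Rightarrow> bool" where
  "proper_total_diff_labeling adj k f \<longleftrightarrow>
     (\<forall>v. f v \<in> {1..k}) \<and>
     (\<forall>u v. adj u v \<longrightarrow> f u \<noteq> f v) \<and>
     (\<forall>u v w. adj u v \<and> adj u w \<and> v \<noteq> w \<longrightarrow>
        \<bar>int (f u) - int (f v)\<bar> \<noteq> \<bar>int (f u) - int (f w)\<bar>) \<and>
     (\<forall>u v. adj u v \<longrightarrow> \<bar>int (f u) - int (f v)\<bar> \<noteq> int (f u)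
                      \<and> \<bar>int (f u) - int (f v)\<bar> \<noteq> int (f v))"

definition chi_td :: "('v \<Rightarrow> 'v \<Rightarrow> bool) \<Rightarrow> nat" where
  "chi_td adj = (LEAST k. k > 0 \<and> (\<exists>f. proper_total_diff_labeling adj k f))"

definition tri_adj :: "int \<times> int \<Rightarrow> int \<times> int \<Rightarrow> bool" where
  "tri_adj p q \<longleftrightarrow>
     (case p of (a, b) \<Rightarrow>
        q \<in> {(a+1, b), (a-1, b), (a, b+1), (a, b-1), (a+1, b+1), (a-1, b-1)})"

end

theory Submission
  imports Defs
begin

definition dst :: "nat \<Rightarrow> nat \<Rightarrow> nat" where
  "dst a b = (if a \<le> b then b - a else a - b)"

definition cp :: "nat \<Rightarrow> nat \<Rightarrow> bool" where
  "cp a b = (a \<noteq> b \<and> dst a b \<noteq> a \<and> dst a b \<noteq> b)"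

lemma dst_int: "int (dst a b) = \<bar>int a - int b\<bar>"
  by (simp add: dst_def)

definition nb :: "int \<times> int \<Rightarrow> (int \<times> int) list" where
  "nb p = (case p of (a,b) \<Rightarrow> [(a+1,b),(a-1,b),(a,b+1),(a,b-1),(a+1,b+1),(a-1,b-1)])"

lemma adj_nb: "tri_adj u v \<longleftrightarrow> v \<in> set (nb u)"
  by (cases u) (auto simp: tri_adj_def nb_def)

lemma nb_distinct: "distinct (nb u)"
  by (cases u) (auto simp: nb_def)

lemma nb_len: "length (nb u) = 6"
  by (cases u) (simp add: nb_def)

lemma proper_cp:
  assumes "proper_total_diff_labeling tri_adj k f" "tri_adj u v"
  shows "cp (f u) (f v)"
proof -
  have "f u \<noteq> f v" "\<bar>int (f u) - int (f v)\<bar> \<noteq> int (f u)" "\<bar>int (f u) - int (f v)\<bar> \<noteq> int (f v)"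
    using assms unfolding proper_total_diff_labeling_def by blast+
  then show ?thesis unfolding cp_def
    by (metis dst_int of_nat_eq_iff)
qed

lemma proper_dist:
  assumes "proper_total_diff_labeling tri_adj k f"
  shows "distinct (map (\<lambda>w. dst (f u) (f w)) (nb u))"
proof -
  have "inj_on (\<lambda>w. dst (f u) (f w)) (set (nb u))"
  proof (rule inj_onI, rule ccontr)
    fix v w assume v: "v \<in> set (nb u)" and w: "w \<in> set (nb u)" and e: "dst (f u) (f v) = dst (f u) (f w)" and ne: "v \<noteq> w"
    have "\<bar>int (f u) - int (f v)\<bar> \<noteq> \<bar>int (f u) - int (f w)\<bar>"
      using assms v w ne unfolding proper_total_diff_labeling_def adj_nb by blast
    then show False using e by (metis dst_int)
  qed
  then show ?thesis by (simp add: distinct_map nb_distinct)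
qed

lemma step:
  assumes P: "proper_total_diff_labeling tri_adj k f"
    and allS: "\<forall>v. f v \<in> set S"
    and chk: "\<forall>x\<in>set S. x \<notin> set T \<longrightarrow> length (remdups (map (dst x) (filter (cp x) S))) < 6"
  shows "f v \<in> set T"
proof (rule ccontr)
  assume nT: "f v \<notin> set T"
  let ?x = "f v"
  let ?L = "map (\<lambda>w. dst ?x (f w)) (nb v)"
  have "card (set ?L) = 6" using proper_dist[OF P, of v] distinct_card nb_len
    by (metis length_map)
  moreover have "set ?L \<subseteq> set (map (dst ?x) (filter (cp ?x) S))"
  proof
    fix d assume "d \<in> set ?L"
    then obtain w where w: "w \<in> set (nb v)" and d: "d = dst ?x (f w)" by auto
    have "cp ?x (f w)" using proper_cp[OF P] w adj_nb by blast
    then show "d \<in> set (map (dst ?x) (filter (cp ?x) S))" proof -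
      have "f w \<in> set (filter (cp ?x) S)" using allS[rule_format, of w] \<open>cp ?x (f w)\<close> by simp
      then show ?thesis unfolding d set_map by (rule imageI)
    qed
  qed
  ultimately have "6 \<le> card (set (map (dst ?x) (filter (cp ?x) S)))"
    by (metis List.finite_set card_mono)
  then have "6 \<le> length (remdups (map (dst ?x) (filter (cp ?x) S)))"
    by (simp add: length_remdups_card_conv)
  moreover have "f v \<in> set S" using allS by blast
  ultimately show False using chk nT by force
qed

definition S0 :: "nat list" where "S0 = [1,2,3,4,5,6,7,8,9,10,11]"
definition S1 :: "nat list" where "S1 = [1,2,3,4,7,8,9,10,11]"
definition S2 :: "nat list" where "S2 = [1,2,3,7,8,9,10,11]"
definition S3 :: "nat list" where "S3 = [1,2,3,7,8,10,11]"
definition S4 :: "nat list" where "S4 = [3,8,10,11]"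

lemma chk1: "\<forall>x\<in>set S0. x \<notin> set S1 \<longrightarrow> length (remdups (map (dst x) (filter (cp x) S0))) < 6"
  by (simp add: S0_def S1_def cp_def dst_def)
lemma chk2: "\<forall>x\<in>set S1. x \<notin> set S2 \<longrightarrow> length (remdups (map (dst x) (filter (cp x) S1))) < 6"
  by (simp add: S1_def S2_def cp_def dst_def)
lemma chk3: "\<forall>x\<in>set S2. x \<notin> set S3 \<longrightarrow> length (remdups (map (dst x) (filter (cp x) S2))) < 6"
  by (simp add: S2_def S3_def cp_def dst_def)
lemma chk4: "\<forall>x\<in>set S3. x \<notin> set S4 \<longrightarrow> length (remdups (map (dst x) (filter (cp x) S3))) < 6"
  by (simp add: S3_def S4_def cp_def dst_def)
lemma chk5: "\<forall>x\<in>set S4. x \<notin> set [] \<longrightarrow> length (remdups (map (dst x) (filter (cp x) S4))) < 6"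
  by (simp add: S4_def cp_def dst_def)

lemma lower:
  assumes P: "proper_total_diff_labeling tri_adj k f" and k: "k < 12"
  shows False
proof -
  have "\<forall>v. f v \<in> set S0"
  proof
    fix v have "f v \<in> {1..k}" using P unfolding proper_total_diff_labeling_def by blast
    then have "1 \<le> f v" "f v \<le> 11" using k by auto
    then show "f v \<in> set S0" unfolding S0_def by (simp, presburger)
  qed
  then have "\<forall>v. f v \<in> set S1" using step[OF P _ chk1] by blast
  then have "\<forall>v. f v \<in> set S2" using step[OF P _ chk2] by blast
  then have "\<forall>v. f v \<in> set S3" using step[OF P _ chk3] by blast
  then have "\<forall>v. f v \<in> set S4" using step[OF P _ chk4] by blast
  then have "\<forall>v. f v \<in> set []" using step[OF P _ chk5] by blast
  then show False by simp
qed

definition col :: "int \<Rightarrow> nat" where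
  "col t = [8,7,1,10,9,4,3,12,11] ! nat (t mod 9)"

definition gl :: "int \<times> int \<Rightarrow> nat" where
  "gl p = (case p of (a,b) \<Rightarrow> col (a + 2*b))"

definition ds :: "int list" where "ds = [1,-1,2,-2,3,-3]"

definition Q :: "int \<Rightarrow> bool" where
  "Q r = (col r \<in> {1..12} \<and> (\<forall>d\<in>set ds. cp (col r) (col (r+d))) \<and>
          distinct (map (\<lambda>d. dst (col r) (col (r+d))) ds))"

lemma col_per: "col (t + d) = col (t mod 9 + d)"
  unfolding col_def by (simp add: mod_add_left_eq)

lemma r9: "0 \<le> (r::int) \<Longrightarrow> r < 9 \<Longrightarrow> r = 0 \<or> r = 1 \<or> r = 2 \<or> r = 3 \<or> r = 4 \<or> r = 5 \<or> r = 6 \<or> r = 7 \<or> r = 8"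
  by arith

lemma Qr: "0 \<le> (r::int) \<Longrightarrow> r < 9 \<Longrightarrow> Q r"
  apply (drule (1) r9)
  apply (elim disjE)
  apply (simp_all add: Q_def ds_def col_def cp_def dst_def)
  done

lemma Qt: "Q t"
proof -
  have "Q (t mod 9)" by (rule Qr) auto
  moreover have "col t = col (t mod 9)" using col_per[of t 0] by simp
  moreover have "\<And>d. col (t + d) = col (t mod 9 + d)" by (rule col_per)
  ultimately show ?thesis unfolding Q_def by simp
qed

lemma map_gl: "map gl (nb (a,b)) = map (\<lambda>d. col (a + 2*b + d)) ds"
  by (simp add: nb_def gl_def ds_def algebra_simps)

lemma gl_u: "gl (a,b) = col (a + 2*b)" by (simp add: gl_def)

lemma upper: "proper_total_diff_labeling tri_adj 12 gl"
proof -
  have Qa: "Q (a + 2*b)" for a b by (rule Qt)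
  have cpn: "cp (gl u) (gl v)" if "tri_adj u v" for u v
  proof -
    obtain a b where u: "u = (a,b)" by (cases u)
    have "gl v \<in> set (map gl (nb u))" using that adj_nb by auto
    then obtain d where "d \<in> set ds" "gl v = col (a + 2*b + d)" unfolding u map_gl by auto
    then show ?thesis using Qa[of a b] unfolding Q_def u gl_u by auto
  qed
  have dd: "distinct (map (\<lambda>w. dst (gl u) (gl w)) (nb u))" for u
  proof -
    obtain a b where u: "u = (a,b)" by (cases u)
    have "map (\<lambda>w. dst (gl u) (gl w)) (nb u) = map (dst (gl u)) (map gl (nb u))" by simp
    also have "\<dots> = map (\<lambda>d. dst (col (a+2*b)) (col (a + 2*b + d))) ds"
      unfolding u map_gl gl_u by simp
    finally show ?thesis using Qa[of a b] unfolding Q_def by simp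
  qed
  show ?thesis unfolding proper_total_diff_labeling_def
  proof (intro conjI allI impI)
    fix v :: "int \<times> int" obtain a b where v: "v = (a,b)" by (cases v)
    show "gl v \<in> {1..12}" using Qa[of a b] unfolding Q_def v gl_u by blast
  next
    fix u v assume "tri_adj u v" then show "gl u \<noteq> gl v" using cpn unfolding cp_def by blast
  next
    fix u v w assume a: "tri_adj u v \<and> tri_adj u w \<and> v \<noteq> w"
    then have "v \<in> set (nb u)" "w \<in> set (nb u)" using adj_nb by auto
    then have "dst (gl u) (gl v) \<noteq> dst (gl u) (gl w)"
      using dd[of u] a unfolding distinct_map inj_on_def by blast
    then show "\<bar>int (gl u) - int (gl v)\<bar> \<noteq> \<bar>int (gl u) - int (gl w)\<bar>"
      by (simp add: dst_int[symmetric])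
  next
    fix u v assume "tri_adj u v"
    then have "cp (gl u) (gl v)" by (rule cpn)
    then show "\<bar>int (gl u) - int (gl v)\<bar> \<noteq> int (gl u)"
      unfolding cp_def by (simp add: dst_int[symmetric])
  next
    fix u v assume "tri_adj u v"
    then have "cp (gl u) (gl v)" by (rule cpn)
    then show "\<bar>int (gl u) - int (gl v)\<bar> \<noteq> int (gl v)"
      unfolding cp_def by (simp add: dst_int[symmetric])
  qed
qed

theorem mainTheorem4:
  shows "chi_td tri_adj = 12"
  unfolding chi_td_def
proof (rule Least_equality)
  show "0 < (12::nat) \<and> (\<exists>f. proper_total_diff_labeling tri_adj 12 f)" using upper by auto
next
  fix k assume "0 < k \<and> (\<exists>f. proper_total_diff_labeling tri_adj k f)"
  then obtain f where "proper_total_diff_labeling tri_adj k f" by blast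
  then have "\<not> k < 12" using lower by blast
  then show "12 \<le> k" by simp
qed

end
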